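(* Let $G$ be a $K_4$-free circular-arc graph with $n = |V(G)| \geq 2$ vertices. Then $G$ has at most $2n$ edges.
   Context: A circular-arc graph is the intersection graph of a finite family of arcs of a circle. A graph is $K_4$-free if it contains no complete subgraph on $4$ vertices. *)

theory Defs
  imports Complex_Main
begin

text \<open>The circle is modelled as the half-open interval [0,1) (i.e. R/Z).
  A (closed) arc is given by a starting point a and a length l with 0 <= l <= 1;
  it consists of the points reached by going counterclockwise from a by at most l.
  Length 1 gives the whole circle.\<close>

definition circle_arc :: "real \<Rightarrow> real \<Rightarrow> real set" where
  "circle_arc a l = {x. 0 \<le> x \<and> x < 1 \<and> frac (x - a) \<le> l}"

definition is_arc :: "real set \<Rightarrow> bool" where
  "is_arc A \<longleftrightarrow> (\<exists>a l. 0 \<le> l \<and> l \<le> 1 \<and> A = circle_arc a l)"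

definition simple_graph :: "'a set \<Rightarrow> ('a \<Rightarrow> 'a \<Rightarrow> bool) \<Rightarrow> bool" where
  "simple_graph V E \<longleftrightarrow> finite V \<and> (\<forall>u v. E u v \<longrightarrow> E v u) \<and> (\<forall>v. \<not> E v v)
     \<and> (\<forall>u v. E u v \<longrightarrow> u \<in> V \<and> v \<in> V)"

definition edges :: "'a set \<Rightarrow> ('a \<Rightarrow> 'a \<Rightarrow> bool) \<Rightarrow> 'a set set" where
  "edges V E = {{u, v} | u v. u \<in> V \<and> v \<in> V \<and> E u v}"

definition circular_arc_graph :: "'a set \<Rightarrow> ('a \<Rightarrow> 'a \<Rightarrow> bool) \<Rightarrow> bool" where
  "circular_arc_graph V E \<longleftrightarrow> (\<exists>arc :: 'a \<Rightarrow> real set.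
      (\<forall>v\<in>V. is_arc (arc v)) \<and>
      (\<forall>u\<in>V. \<forall>v\<in>V. u \<noteq> v \<longrightarrow> (E u v \<longleftrightarrow> arc u \<inter> arc v \<noteq> {})))"

definition K4_free :: "'a set \<Rightarrow> ('a \<Rightarrow> 'a \<Rightarrow> bool) \<Rightarrow> bool" where
  "K4_free V E \<longleftrightarrow> \<not> (\<exists>S \<subseteq> V. card S = 4 \<and> (\<forall>u\<in>S. \<forall>v\<in>S. u \<noteq> v \<longrightarrow> E u v))"

end

theory Submission
  imports Defs
begin

lemma key_frac:
  fixes x a1 a2 :: real
  assumes "frac (x - a1) \<le> frac (x - a2)"
  shows "frac (frac a1 - a2) \<le> frac (x - a2)"
proof -
  have "frac (frac a1 - a2) = frac (x - a2) - frac (x - a1)"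
    unfolding frac_unique_iff
  proof (intro conjI)
    have "frac a1 - a2 - (frac (x - a2) - frac (x - a1))
          = of_int (\<lfloor>x - a2\<rfloor> - \<lfloor>x - a1\<rfloor> - \<lfloor>a1\<rfloor>)"
      by (simp add: frac_def)
    then show "frac a1 - a2 - (frac (x - a2) - frac (x - a1)) \<in> \<int>"
      by (metis Ints_of_int)
    show "0 \<le> frac (x - a2) - frac (x - a1)" using assms by simp
    show "frac (x - a2) - frac (x - a1) < 1"
      using frac_lt_1[of "x - a2"] frac_ge_0[of "x - a1"] by linarith
  qed
  then show ?thesis using frac_ge_0[of "x - a1"] by linarith
qed

lemma arc_meet:
  assumes "circle_arc a1 l1 \<inter> circle_arc a2 l2 \<noteq> {}"
  shows "frac a1 \<in> circle_arc a2 l2 \<or> frac a2 \<in> circle_arc a1 l1"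
proof -
  obtain x where x1: "frac (x - a1) \<le> l1" and x2: "frac (x - a2) \<le> l2"
    using assms unfolding circle_arc_def by auto
  show ?thesis
  proof (cases "frac (x - a1) \<le> frac (x - a2)")
    case True
    then have "frac (frac a1 - a2) \<le> l2" using key_frac[OF True] x2 by linarith
    then show ?thesis unfolding circle_arc_def using frac_lt_1 by auto
  next
    case False
    then have "frac (x - a2) \<le> frac (x - a1)" by simp
    from key_frac[OF this] x1 have "frac (frac a2 - a1) \<le> l1" by linarith
    then show ?thesis unfolding circle_arc_def using frac_lt_1 by auto
  qed
qed

theorem lemma2:
  fixes V :: "'a set" and E :: "'a \<Rightarrow> 'a \<Rightarrow> bool"
  assumes "simple_graph V E"
    and "circular_arc_graph V E"
    and "K4_free V E"
    and "card V \<ge> 2"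
  shows "card (edges V E) \<le> 2 * card V"
proof -
  have fin: "finite V" and sym: "\<And>u v. E u v \<Longrightarrow> E v u" and irr: "\<And>v. \<not> E v v"
    using assms(1) unfolding simple_graph_def by auto
  obtain arc :: "'a \<Rightarrow> real set" where arcs: "\<forall>v\<in>V. is_arc (arc v)"
    and adj: "\<forall>u\<in>V. \<forall>v\<in>V. u \<noteq> v \<longrightarrow> (E u v \<longleftrightarrow> arc u \<inter> arc v \<noteq> {})"
    using assms(2) unfolding circular_arc_graph_def by blast
  have "\<forall>v\<in>V. \<exists>al. 0 \<le> snd al \<and> arc v = circle_arc (fst al) (snd al)"
    using arcs unfolding is_arc_def by fastforce
  then have "\<exists>f. \<forall>v\<in>V. 0 \<le> snd (f v) \<and> arc v = circle_arc (fst (f v)) (snd (f v))"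
    by (rule bchoice)
  then obtain f where f: "\<forall>v\<in>V. 0 \<le> snd (f v) \<and> arc v = circle_arc (fst (f v)) (snd (f v))"
    by blast
  define a where "a v = fst (f v)" for v
  define l where "l v = snd (f v)" for v
  have al: "\<And>v. v \<in> V \<Longrightarrow> arc v = circle_arc (a v) (l v)"
    and l0: "\<And>v. v \<in> V \<Longrightarrow> 0 \<le> l v"
    using f unfolding a_def l_def by blast+
  define p where "p v = frac (a v)" for v
  have pin: "p v \<in> arc v" if "v \<in> V" for v
  proof -
    have "frac (frac (a v) - a v) = 0"
      proof -
      have "frac (a v) - a v = of_int (- \<lfloor>a v\<rfloor>)" by (simp add: frac_def)
      then show ?thesis by simp
    qed
    then have "frac (frac (a v) - a v) \<le> l v" using l0[OF that] by linarith
    then have "p v \<in> circle_arc (a v) (l v)" unfolding p_def circle_arc_def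
      using frac_lt_1[of "a v"] frac_ge_0[of "a v"] by blast
    then show ?thesis using al[OF that] by simp
  qed
  define N where "N w = {v \<in> V. v \<noteq> w \<and> p w \<in> arc v}" for w
  have Ncard: "card (N w) \<le> 2" if w: "w \<in> V" for w
  proof (rule ccontr)
    assume "\<not> card (N w) \<le> 2"
    then have "card (N w) \<ge> 3" by simp
    moreover have fN: "finite (N w)" using fin unfolding N_def by auto
    ultimately obtain T where T: "T \<subseteq> N w" "card T = 3"
      by (meson obtain_subset_with_card_n)
    have wT: "w \<notin> T" using T unfolding N_def by auto
    define S where "S = insert w T"
    have fT: "finite T" using T fN finite_subset by blast
    have "card S = 4" unfolding S_def using T wT fT by simp
    moreover have "S \<subseteq> V" unfolding S_def using T w unfolding N_def by auto
    moreover have "\<forall>u\<in>S. \<forall>v\<in>S. u \<noteq> v \<longrightarrow> E u v"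
    proof (intro ballI impI)
      fix u v assume u: "u \<in> S" and v: "v \<in> S" and uv: "u \<noteq> v"
      have "p w \<in> arc u" using u pin[OF w] T unfolding S_def N_def by auto
      moreover have "p w \<in> arc v" using v pin[OF w] T unfolding S_def N_def by auto
      ultimately have "arc u \<inter> arc v \<noteq> {}" by blast
      moreover have "u \<in> V" "v \<in> V" using u v \<open>S \<subseteq> V\<close> by auto
      ultimately show "E u v" using adj uv by blast
    qed
    ultimately show False using assms(3) unfolding K4_free_def by blast
  qed
  have sub: "edges V E \<subseteq> (\<Union>w\<in>V. (\<lambda>v. {w, v}) ` N w)"
  proof
    fix e assume "e \<in> edges V E"
    then obtain u v where e: "e = {u, v}" and uv: "u \<in> V" "v \<in> V" "E u v"
      unfolding edges_def by blast
    have ne: "u \<noteq> v" using uv irr by auto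
    have "arc u \<inter> arc v \<noteq> {}" using adj uv ne by blast
    then have "circle_arc (a u) (l u) \<inter> circle_arc (a v) (l v) \<noteq> {}"
      using al[OF uv(1)] al[OF uv(2)] by simp
    then have "frac (a u) \<in> circle_arc (a v) (l v) \<or> frac (a v) \<in> circle_arc (a u) (l u)"
      by (rule arc_meet)
    then have "p u \<in> arc v \<or> p v \<in> arc u"
      using al[OF uv(1)] al[OF uv(2)] unfolding p_def by simp
    then show "e \<in> (\<Union>w\<in>V. (\<lambda>v. {w, v}) ` N w)"
    proof
      assume "p u \<in> arc v"
      then have "v \<in> N u" using uv ne unfolding N_def by auto
      then show ?thesis using e uv by blast
    next
      assume "p v \<in> arc u"
      then have "u \<in> N v" using uv ne unfolding N_def by auto
      then show ?thesis using e uv by (auto simp: insert_commute)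
    qed
  qed
  have fU: "finite (\<Union>w\<in>V. (\<lambda>v. {w, v}) ` N w)"
    using fin unfolding N_def by auto
  have "card (edges V E) \<le> card (\<Union>w\<in>V. (\<lambda>v. {w, v}) ` N w)"
    using card_mono[OF fU sub] .
  also have "\<dots> \<le> (\<Sum>w\<in>V. card ((\<lambda>v. {w, v}) ` N w))"
    using card_UN_le[OF fin] .
  also have "\<dots> \<le> (\<Sum>w\<in>V. 2)"
  proof (rule sum_mono)
    fix w assume "w \<in> V"
    have "finite (N w)" using fin unfolding N_def by auto
    then have "card ((\<lambda>v. {w, v}) ` N w) \<le> card (N w)" by (rule card_image_le)
    then show "card ((\<lambda>v. {w, v}) ` N w) \<le> 2" using Ncard[OF \<open>w \<in> V\<close>] by linarith
  qed
  also have "\<dots> = 2 * card V" by simp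
  finally show ?thesis .
qed

end
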